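(* Let $G$ be a network as described in the context and consider (BBMG) on $G$ with coefficients $a_i>0$, $b_i\in\mathbb{R}\setminus\{0\}$, $d_i\in\mathbb{R}$. If there exists a non-constant travelling wave solution $u$ of (BBMG) with all speeds $c_i>0$, then no ramification vertex of $G$ is a sink or a source.
   Context: A network $G$ is obtained from a non-empty, simple, connected, at most countable, locally finite graph by realizing each edge $\mathsf{e}_j$ ($j\in\mathbf{E}\subset\mathbb{N}$) as the image of a $\mathcal{C}^2$ Jordan curve $\pi_j:[0,\ell_j]\to\mathbb{R}^m$ with arc-length parameter $x_j\in[0,\ell_j]$; two distinct edges meet at most in one common vertex. For a vertex $\mathsf{v}$, $N(\mathsf{v})$ is the set of indices of edges incident to $\mathsf{v}$; $V_r$ is the set of vertices of degree $\ge2$ (ramification vertices). Incidence numbers: $\iota_{ij}=1$ if $\pi_j(\ell_j)=\mathsf{v}_i$ (edge incoming at $\mathsf{v}_i$), $\iota_{ij}=-1$ if $\pi_j(0)=\mathsf{v}_i$ (edge outgoing at $\mathsf{v}_i$), $\iota_{ij}=0$ otherwise. A vertex is a sink if all its incident edges are incoming, a source if all are outgoing. For $u$ on $G$, $u_j(x_j,t)=u(\pi_j(x_j),t)$, $\partial_j=\partial/\partial x_j$, and $u_j(t,\mathsf{v}_i)$, $\partial_ju_j(t,\mathsf{v}_i)$ are values at $x_j=\pi_j^{-1}(\mathsf{v}_i)$. (BBMG): $\partial_t u_i - a_i\partial_i^2\partial_t u_i + b_i u_i\partial_i u_i + d_i\partial_i u_i=0$ on each $\mathsf{e}_i$, $t>0$;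 for each $\mathsf{v}_p\in V_r$ and $t\ge0$: $u_j(t,\mathsf{v}_p)=u_k(t,\mathsf{v}_p)$ for $j,k\in N(\mathsf{v}_p)$, and $\sum_j\iota_{pj}a_j\partial_ju_j(t,\mathsf{v}_p)=0$. No initial or boundary-vertex conditions. A strong solution is a function $u$ continuous on $G$ with $u_i\in\mathcal{C}^{1,1}(\mathsf{e}_i\times[0,\infty))$, $\partial_tu_i\in\mathcal{C}^{2,0}(\mathsf{e}_i\times[0,\infty))$, satisfying (BBMG) pointwise. A travelling wave is a strong solution with speeds $c_i\ge0$ and $\varphi_i\in\mathcal{C}^3(\mathbb{R})$ such that $u_i(x_i,t)=\varphi_i(x_i-c_it)$ for all $x_i\in\mathsf{e}_i$, $t\ge0$. *)

theory Defs
  imports "HOL-Analysis.Analysis"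
begin

text \<open>Networks: edges indexed by E \<subseteq> nat, edge j realized by the curve
  gam j restricted to [0, len j], arc-length parametrized, C^2, injective (Jordan arc).\<close>

definition C2_arc :: "(real \<Rightarrow> 'a::euclidean_space) \<Rightarrow> real \<Rightarrow> bool" where
  "C2_arc f l \<longleftrightarrow> (\<exists>f' f''. (\<forall>x\<in>{0..l}.
      (f has_vector_derivative f' x) (at x within {0..l}) \<and>
      (f' has_vector_derivative f'' x) (at x within {0..l}) \<and>
      norm (f' x) = 1) \<and> continuous_on {0..l} f'')"

definition edge_img :: "(nat \<Rightarrow> real) \<Rightarrow> (nat \<Rightarrow> real \<Rightarrow> 'a) \<Rightarrow> nat \<Rightarrow> 'a set" where
  "edge_img len gam j = gam j ` {0..len j}"

definition ends :: "(nat \<Rightarrow> real) \<Rightarrow> (nat \<Rightarrow> real \<Rightarrow> 'a) \<Rightarrow> nat \<Rightarrow> 'a set" where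
  "ends len gam j = {gam j 0, gam j (len j)}"

definition net_points :: "nat set \<Rightarrow> (nat \<Rightarrow> real) \<Rightarrow> (nat \<Rightarrow> real \<Rightarrow> 'a) \<Rightarrow> 'a set" where
  "net_points E len gam = (\<Union>j\<in>E. edge_img len gam j)"

definition vertices :: "nat set \<Rightarrow> (nat \<Rightarrow> real) \<Rightarrow> (nat \<Rightarrow> real \<Rightarrow> 'a) \<Rightarrow> 'a set" where
  "vertices E len gam = (\<Union>j\<in>E. ends len gam j)"

definition incident :: "nat set \<Rightarrow> (nat \<Rightarrow> real) \<Rightarrow> (nat \<Rightarrow> real \<Rightarrow> 'a) \<Rightarrow> 'a \<Rightarrow> nat set" where
  "incident E len gam v = {j\<in>E. v \<in> ends len gam j}"

definition ram_vertices :: "nat set \<Rightarrow> (nat \<Rightarrow> real) \<Rightarrow> (nat \<Rightarrow> real \<Rightarrow> 'a) \<Rightarrow> 'a set" where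
  "ram_vertices E len gam = {v\<in>vertices E len gam. card (incident E len gam v) \<ge> 2}"

definition adjacent :: "nat set \<Rightarrow> (nat \<Rightarrow> real) \<Rightarrow> (nat \<Rightarrow> real \<Rightarrow> 'a) \<Rightarrow> 'a \<Rightarrow> 'a \<Rightarrow> bool" where
  "adjacent E len gam v w \<longleftrightarrow> (\<exists>j\<in>E. ends len gam j = {v, w})"

definition network :: "nat set \<Rightarrow> (nat \<Rightarrow> real) \<Rightarrow> (nat \<Rightarrow> real \<Rightarrow> 'a::euclidean_space) \<Rightarrow> bool" where
  "network E len gam \<longleftrightarrow>
     E \<noteq> {} \<and>
     (\<forall>j\<in>E. len j > 0 \<and> C2_arc (gam j) (len j) \<and> inj_on (gam j) {0..len j}) \<and>
     (\<forall>i\<in>E. \<forall>j\<in>E. i \<noteq> j \<longrightarrow>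
        edge_img len gam i \<inter> edge_img len gam j \<subseteq> ends len gam i \<inter> ends len gam j \<and>
        card (ends len gam i \<inter> ends len gam j) \<le> 1) \<and>
     (\<forall>v\<in>vertices E len gam. finite (incident E len gam v)) \<and>
     (\<forall>v\<in>vertices E len gam. \<forall>w\<in>vertices E len gam.
        (v, w) \<in> {(x, y). adjacent E len gam x y}\<^sup>*)"

definition iota :: "(nat \<Rightarrow> real) \<Rightarrow> (nat \<Rightarrow> real \<Rightarrow> 'a) \<Rightarrow> 'a \<Rightarrow> nat \<Rightarrow> real" where
  "iota len gam v j = (if gam j (len j) = v then 1 else if gam j 0 = v then -1 else 0)"

definition vparam :: "(nat \<Rightarrow> real) \<Rightarrow> (nat \<Rightarrow> real \<Rightarrow> 'a) \<Rightarrow> nat \<Rightarrow> 'a \<Rightarrow> real" where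
  "vparam len gam j v = (if gam j 0 = v then 0 else len j)"

definition is_sink :: "nat set \<Rightarrow> (nat \<Rightarrow> real) \<Rightarrow> (nat \<Rightarrow> real \<Rightarrow> 'a) \<Rightarrow> 'a \<Rightarrow> bool" where
  "is_sink E len gam v \<longleftrightarrow> (\<forall>j\<in>incident E len gam v. iota len gam v j = 1)"

definition is_source :: "nat set \<Rightarrow> (nat \<Rightarrow> real) \<Rightarrow> (nat \<Rightarrow> real \<Rightarrow> 'a) \<Rightarrow> 'a \<Rightarrow> bool" where
  "is_source E len gam v \<longleftrightarrow> (\<forall>j\<in>incident E len gam v. iota len gam v j = -1)"

text \<open>Strong solution of (BBMG). u_j(x,t) = u(pi_j x, t); ux, ut, utx, utxx are the
  partial derivatives d_x u_j, d_t u_j, d_x d_t u_j, d_x^2 d_t u_j (one-sided at the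
  boundary of e_j x [0,oo)), all continuous on [0,len j] x [0,oo).\<close>
definition strong_solution ::
  "nat set \<Rightarrow> (nat \<Rightarrow> real) \<Rightarrow> (nat \<Rightarrow> real \<Rightarrow> 'a::euclidean_space) \<Rightarrow>
   (nat \<Rightarrow> real) \<Rightarrow> (nat \<Rightarrow> real) \<Rightarrow> (nat \<Rightarrow> real) \<Rightarrow> ('a \<Rightarrow> real \<Rightarrow> real) \<Rightarrow> bool" where
  "strong_solution E len gam a b d u \<longleftrightarrow>
     continuous_on (net_points E len gam \<times> {0..}) (\<lambda>(p, t). u p t) \<and>
     (\<exists>ux ut utx utxx :: nat \<Rightarrow> real \<Rightarrow> real \<Rightarrow> real.
       (\<forall>j\<in>E.
        (\<forall>x\<in>{0..len j}. \<forall>t\<in>{0..}.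
           ((\<lambda>y. u (gam j y) t) has_real_derivative ux j x t) (at x within {0..len j}) \<and>
           ((\<lambda>s. u (gam j x) s) has_real_derivative ut j x t) (at t within {0..}) \<and>
           ((\<lambda>y. ut j y t) has_real_derivative utx j x t) (at x within {0..len j}) \<and>
           ((\<lambda>y. utx j y t) has_real_derivative utxx j x t) (at x within {0..len j})) \<and>
        continuous_on ({0..len j} \<times> {0..}) (\<lambda>(x, t). u (gam j x) t) \<and>
        continuous_on ({0..len j} \<times> {0..}) (\<lambda>(x, t). ux j x t) \<and>
        continuous_on ({0..len j} \<times> {0..}) (\<lambda>(x, t). ut j x t) \<and>
        continuous_on ({0..len j} \<times> {0..}) (\<lambda>(x, t). utx j x t) \<and>
        continuous_on ({0..len j} \<times> {0..}) (\<lambda>(x, t). utxx j x t) \<and>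
        (\<forall>x\<in>{0<..<len j}. \<forall>t>0.
           ut j x t - a j * utxx j x t + b j * u (gam j x) t * ux j x t + d j * ux j x t = 0)) \<and>
       (\<forall>v\<in>ram_vertices E len gam. \<forall>t\<ge>0.
           (\<Sum>k\<in>incident E len gam v. iota len gam v k * a k * ux k (vparam len gam k v) t) = 0)) \<and>
     (\<forall>v\<in>ram_vertices E len gam. \<forall>t\<ge>0. \<forall>j\<in>incident E len gam v. \<forall>k\<in>incident E len gam v.
        u (gam j (vparam len gam j v)) t = u (gam k (vparam len gam k v)) t)"

definition C3 :: "(real \<Rightarrow> real) \<Rightarrow> bool" where
  "C3 f \<longleftrightarrow> (\<exists>f1 f2 f3. (\<forall>x. (f has_real_derivative f1 x) (at x) \<and>
      (f1 has_real_derivative f2 x) (at x) \<and> (f2 has_real_derivative f3 x) (at x)) \<and>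
      continuous_on UNIV f3)"

definition travelling_wave ::
  "nat set \<Rightarrow> (nat \<Rightarrow> real) \<Rightarrow> (nat \<Rightarrow> real \<Rightarrow> 'a::euclidean_space) \<Rightarrow>
   (nat \<Rightarrow> real) \<Rightarrow> (nat \<Rightarrow> real) \<Rightarrow> (nat \<Rightarrow> real) \<Rightarrow> ('a \<Rightarrow> real \<Rightarrow> real) \<Rightarrow>
   (nat \<Rightarrow> real) \<Rightarrow> (nat \<Rightarrow> real \<Rightarrow> real) \<Rightarrow> bool" where
  "travelling_wave E len gam a b d u c phi \<longleftrightarrow>
     strong_solution E len gam a b d u \<and>
     (\<forall>j\<in>E. c j \<ge> 0 \<and> C3 (phi j) \<and>
        (\<forall>x\<in>{0..len j}. \<forall>t\<ge>0. u (gam j x) t = phi j (x - c j * t)))"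

end

theory Submission
  imports Defs
begin

lemma left_lim:
  fixes f :: "real \<Rightarrow> real"
  assumes "isCont f x" "\<forall>z<x. f z = C" shows "f x = C"
proof -
  have "(f \<longlongrightarrow> f x) (at_left x)" using assms(1) by (simp add: isCont_def filterlim_at_split)
  moreover have "(f \<longlongrightarrow> C) (at_left x)"
    by (rule tendsto_eventually) (metis (mono_tags, lifting) assms(2) eventually_at_left_field lt_ex)
  ultimately show ?thesis using tendsto_unique trivial_limit_at_left_real by blast
qed

lemma deriv_zero_neg:
  fixes f g :: "real \<Rightarrow> real"
  assumes "\<forall>x. (f has_real_derivative g x) (at x)" "\<forall>z<0. f z = C"
  shows "\<forall>z<0. g z = 0"
proof (intro allI impI)
  fix z :: real assume z: "z < 0"
  have "((\<lambda>_. C) has_real_derivative 0) (at z)" by simp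
  hence "(f has_real_derivative 0) (at z)"
    by (rule has_field_derivative_transform_within_open[where S="{..<0}"]) (use z assms(2) in auto)
  thus "g z = 0" using assms(1) DERIV_unique by blast
qed

lemma ode_flat:
  fixes \<phi> f1 f2 f3 :: "real \<Rightarrow> real"
  assumes d: "\<forall>x. (\<phi> has_real_derivative f1 x) (at x) \<and> (f1 has_real_derivative f2 x) (at x) \<and> (f2 has_real_derivative f3 x) (at x)"
  and ode: "\<forall>z<l. f3 z = (\<alpha> + \<beta> * \<phi> z) * f1 z"
  and flat: "\<forall>z\<le>0. \<phi> z = C" and l: "0 < l"
  shows "\<forall>z\<le>l. \<phi> z = C"
proof -
  have d1: "\<forall>x. (\<phi> has_real_derivative f1 x) (at x)" and d2: "\<forall>x. (f1 has_real_derivative f2 x) (at x)"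
    and d3: "\<forall>x. (f2 has_real_derivative f3 x) (at x)" using d by auto
  have f1n: "\<forall>z<0. f1 z = 0" using deriv_zero_neg[OF d1] flat by auto
  have f10: "f1 0 = 0" using left_lim[OF DERIV_isCont[OF d2[rule_format]] f1n] .
  have f2n: "\<forall>z<0. f2 z = 0" using deriv_zero_neg[OF d2] f1n by auto
  have f20: "f2 0 = 0" using left_lim[OF DERIV_isCont[OF d3[rule_format]] f2n] .
  have contphi: "continuous_on UNIV \<phi>"
    using d1 DERIV_isCont continuous_at_imp_continuous_on by blast
  have main: "\<phi> z = C" if s: "0 < s" "s < l" and z: "z \<in> {0..s}" for s z
  proof -
    have "continuous_on {0..s} (\<lambda>z. \<alpha> + \<beta> * \<phi> z)"
      by (intro continuous_intros continuous_on_subset[OF contphi]) auto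
    then have "compact ((\<lambda>z. \<alpha> + \<beta> * \<phi> z) ` {0..s})" by (rule compact_continuous_image) simp
    then obtain K where K: "\<forall>y\<in>{0..s}. \<bar>\<alpha> + \<beta> * \<phi> y\<bar> \<le> K"
      using compact_imp_bounded bounded_real by (metis imageI)
    define M where "M = 2 + K^2"
    define E where "E z = (\<phi> z - C)^2 + f1 z^2 + f2 z^2" for z
    define E' where "E' z = 2*(\<phi> z - C)*f1 z + 2*f1 z*f2 z + 2*f2 z*f3 z" for z
    define h where "h z = exp(-M*z) * E z" for z
    have dE: "(E has_real_derivative E' y) (at y)" for y
      unfolding E_def E'_def using d1 d2 d3
      by (auto intro!: derivative_eq_intros simp: algebra_simps power2_eq_square)
    have bnd: "E' y \<le> M * E y" if y: "y \<in> {0..s}" for y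
    proof -
      have f3y: "f3 y = (\<alpha> + \<beta> * \<phi> y) * f1 y" using ode y s by auto
      have "(\<alpha> + \<beta> * \<phi> y)^2 \<le> K^2" using K y
        by (metis abs_ge_zero power2_abs power_mono)
      hence "f3 y ^2 \<le> K^2 * f1 y^2" unfolding f3y power_mult_distrib
        by (intro mult_right_mono) auto
      moreover have "2*(\<phi> y - C)*f1 y \<le> (\<phi> y - C)^2 + f1 y^2" by (rule sum_squares_bound)
      moreover have "2*f1 y*f2 y \<le> f1 y^2 + f2 y^2" by (rule sum_squares_bound)
      moreover have "2*f2 y*f3 y \<le> f2 y^2 + f3 y^2" by (rule sum_squares_bound)
      ultimately have "E' y \<le> (\<phi> y - C)^2 + (2 + K^2) * f1 y^2 + 2 * f2 y^2"
        unfolding E'_def by (simp add: algebra_simps)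
      also have "\<dots> \<le> M * E y" unfolding M_def E_def
        by (simp add: algebra_simps add_mono mult_right_mono)
      finally show ?thesis .
    qed
    have dh: "\<exists>D. (h has_real_derivative D) (at y) \<and> D \<le> 0" if y: "0 \<le> y" "y \<le> z" for y
    proof -
      have "(h has_real_derivative (exp(-M*y) * (-M) * E y + exp(-M*y) * E' y)) (at y)"
        unfolding h_def by (auto intro!: derivative_eq_intros dE)
      moreover have "exp(-M*y) * (-M) * E y + exp(-M*y) * E' y = exp(-M*y) * (E' y - M * E y)"
        by (simp add: algebra_simps)
      moreover have "exp(-M*y) * (E' y - M * E y) \<le> 0"
        using bnd[of y] y z by (intro mult_nonneg_nonpos) auto
      ultimately show ?thesis by auto
    qed
    have "h z \<le> h 0" using DERIV_nonpos_imp_nonincreasing[of 0 z h] dh z by auto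
    moreover have "h 0 = 0" unfolding h_def E_def using flat f10 f20 by simp
    moreover have "E z \<ge> 0" unfolding E_def by simp
    ultimately have "E z = 0" unfolding h_def
      by (metis exp_gt_zero linorder_not_le mult_pos_pos order_le_less)
    hence "(\<phi> z - C)^2 \<le> 0" unfolding E_def
      using zero_le_power2[of "f1 z"] zero_le_power2[of "f2 z"] by linarith
    thus ?thesis by simp
  qed
  have lt: "\<phi> z = C" if "z < l" for z
  proof (cases "z \<le> 0")
    case True thus ?thesis using flat by auto
  next
    case False thus ?thesis using main[of z z] that by auto
  qed
  have "\<phi> l = C" using left_lim[OF DERIV_isCont[OF d1[rule_format]]] lt by blast
  thus ?thesis using lt by (metis order_le_less)
qed
lemma L1:
  fixes f g :: "real \<Rightarrow> real"
  assumes "\<forall>z. (f has_real_derivative g z) (at z)"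
  shows "((\<lambda>y. f (y - a)) has_real_derivative g (x - a)) (at x)"
proof -
  have "((\<lambda>y. y - a) has_real_derivative 1) (at x)" by (auto intro!: derivative_eq_intros)
  from DERIV_chain2[OF assms[rule_format, of "x - a"] this] show ?thesis by simp
qed
lemma L2:
  fixes f g :: "real \<Rightarrow> real"
  assumes "\<forall>z. (f has_real_derivative g z) (at z)"
  shows "((\<lambda>w. f (x - k*w)) has_real_derivative (- k * g (x - k*t))) (at t)"
proof -
  have "((\<lambda>w. x - k*w) has_real_derivative -k) (at t)" by (auto intro!: derivative_eq_intros)
  from DERIV_chain2[OF assms[rule_format, of "x - k*t"] this] show ?thesis by (simp add: mult.commute)
qed

lemma vertex_flat:
  fixes \<phi> f1 f2 f3 :: "real \<Rightarrow> real"
  assumes d: "\<forall>x. (\<phi> has_real_derivative f1 x) (at x) \<and> (f1 has_real_derivative f2 x) (at x) \<and> (f2 has_real_derivative f3 x) (at x)"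
  and ode: "\<forall>z<l. f3 z = (\<alpha> + \<beta> * \<phi> z) * f1 z"
  and l: "0 < l" and k: "0 < k" and p: "p = 0 \<or> p = l"
  and h: "\<forall>t\<ge>0. \<phi> (p - k * t) = C"
  shows "\<forall>z\<le>l. \<phi> z = C"
  using p
proof
  assume p0: "p = 0"
  have "\<forall>z\<le>0. \<phi> z = C"
  proof (intro allI impI)
    fix z :: real assume "z \<le> 0"
    hence "- z / k \<ge> 0" using k by (simp add: divide_nonpos_pos)
    with h have "\<phi> (p - k * (- z / k)) = C" by blast
    thus "\<phi> z = C" using p0 k by simp
  qed
  thus ?thesis using ode_flat[OF d ode _ l] by blast
next
  assume pl: "p = l"
  show ?thesis
  proof (intro allI impI)
    fix z :: real assume "z \<le> l"
    hence "(l - z) / k \<ge> 0" using k by simp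
    with h have "\<phi> (p - k * ((l - z) / k)) = C" by blast
    thus "\<phi> z = C" using pl k by simp
  qed
qed


lemma nbot_Icc: "(0::real) < l \<Longrightarrow> x \<in> {0..l} \<Longrightarrow> at x within {0..l} \<noteq> bot"
  using islimpt_Icc trivial_limit_within by blast

lemma nbot_Ici: "x \<in> {(0::real)..} \<Longrightarrow> at x within {0..} \<noteq> bot"
  by (metis Ioi_le_Ico abs_eq_iff' atLeast_iff at_le at_within_open
    bot.extremum_uniqueI greaterThan_iff open_greaterThan trivial_limit_at
    trivial_limit_at_right_real zero_less_abs_iff)

lemma DU:
  fixes f g :: "real \<Rightarrow> real"
  assumes "(f has_real_derivative D) (at x within S)" "(g has_real_derivative D') (at x)"
    "\<forall>y\<in>S. f y = g y" "x\<in>S" "at x within S \<noteq> bot"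
  shows "D = D'"
proof -
  have "(g has_real_derivative D') (at x within S)" using assms(2) by (rule has_field_derivative_at_within)
  hence g': "(g has_derivative (*) D') (at x within S)" unfolding has_field_derivative_def .
  have "(f has_derivative (*) D') (at x within S)"
    by (rule has_derivative_transform[OF assms(4) _ g']) (use assms(3) in simp)
  hence "(f has_real_derivative D') (at x within S)" unfolding has_field_derivative_def .
  thus ?thesis using assms(1,5) has_field_derivative_unique by blast
qed

theorem lemma3p6:
  fixes E :: "nat set" and len :: "nat \<Rightarrow> real" and gam :: "nat \<Rightarrow> real \<Rightarrow> 'a::euclidean_space"
    and a b d c :: "nat \<Rightarrow> real" and u :: "'a \<Rightarrow> real \<Rightarrow> real" and phi :: "nat \<Rightarrow> real \<Rightarrow> real"
  assumes "network E len gam"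
    and "\<forall>j\<in>E. a j > 0 \<and> b j \<noteq> 0"
    and "travelling_wave E len gam a b d u c phi"
    and "\<forall>j\<in>E. c j > 0"
    and "\<not> (\<exists>C. \<forall>p\<in>net_points E len gam. \<forall>t\<ge>0. u p t = C)"
  shows "\<forall>v\<in>ram_vertices E len gam. \<not> is_sink E len gam v \<and> \<not> is_source E len gam v"
proof (rule ccontr)
  assume "\<not> ?thesis"
  then obtain v0 where v0: "v0 \<in> ram_vertices E len gam"
    and ss: "is_sink E len gam v0 \<or> is_source E len gam v0" by blast
  from assms(1) have lenpos: "\<forall>j\<in>E. len j > 0"
    and fin: "\<forall>v\<in>vertices E len gam. finite (incident E len gam v)"
    and conn: "\<forall>v\<in>vertices E len gam. \<forall>w\<in>vertices E len gam.
        (v, w) \<in> {(x, y). adjacent E len gam x y}\<^sup>*"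
    unfolding network_def by auto
  from assms(3) have sol: "strong_solution E len gam a b d u"
    and tw: "\<forall>j\<in>E. c j \<ge> 0 \<and> C3 (phi j) \<and>
        (\<forall>x\<in>{0..len j}. \<forall>t\<ge>0. u (gam j x) t = phi j (x - c j * t))"
    unfolding travelling_wave_def by auto
  have uphi: "\<And>j x t. j \<in> E \<Longrightarrow> x\<in>{0..len j} \<Longrightarrow> t \<ge> 0 \<Longrightarrow> u (gam j x) t = phi j (x - c j * t)"
    using tw by blast
  have apos: "\<And>j. j \<in> E \<Longrightarrow> a j > 0" and cpos: "\<And>j. j \<in> E \<Longrightarrow> c j > 0" using assms(2,4) by auto
  from sol obtain ux ut utx utxx :: "nat \<Rightarrow> real \<Rightarrow> real \<Rightarrow> real" where
    der: "\<forall>j\<in>E. \<forall>x\<in>{0..len j}. \<forall>t\<in>{0..}.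
           ((\<lambda>y. u (gam j y) t) has_real_derivative ux j x t) (at x within {0..len j}) \<and>
           ((\<lambda>s. u (gam j x) s) has_real_derivative ut j x t) (at t within {0..}) \<and>
           ((\<lambda>y. ut j y t) has_real_derivative utx j x t) (at x within {0..len j}) \<and>
           ((\<lambda>y. utx j y t) has_real_derivative utxx j x t) (at x within {0..len j})"
    and pde: "\<forall>j\<in>E. \<forall>x\<in>{0<..<len j}. \<forall>t>0.
           ut j x t - a j * utxx j x t + b j * u (gam j x) t * ux j x t + d j * ux j x t = 0"
    and kh: "\<forall>v\<in>ram_vertices E len gam. \<forall>t\<ge>0.
           (\<Sum>k\<in>incident E len gam v. iota len gam v k * a k * ux k (vparam len gam k v) t) = 0"
    and cont: "\<forall>v\<in>ram_vertices E len gam. \<forall>t\<ge>0. \<forall>j\<in>incident E len gam v. \<forall>k\<in>incident E len gam v.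
        u (gam j (vparam len gam j v)) t = u (gam k (vparam len gam k v)) t"
    unfolding strong_solution_def by blast
  have "\<forall>j\<in>E. \<exists>f1 f2 f3. \<forall>x. (phi j has_real_derivative f1 x) (at x) \<and>
      (f1 has_real_derivative f2 x) (at x) \<and> (f2 has_real_derivative f3 x) (at x)"
    using tw unfolding C3_def by blast
  then obtain F1 F2 F3 where F: "\<And>j. j \<in> E \<Longrightarrow> \<forall>x. (phi j has_real_derivative F1 j x) (at x) \<and>
      (F1 j has_real_derivative F2 j x) (at x) \<and> (F2 j has_real_derivative F3 j x) (at x)"
    by metis
  have F1d: "\<forall>x. (phi j has_real_derivative F1 j x) (at x)"
   and F2d: "\<forall>x. (F1 j has_real_derivative F2 j x) (at x)"
   and F3d: "\<forall>x. (F2 j has_real_derivative F3 j x) (at x)" if "j \<in> E" for j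
    using F[OF that] by auto

  have uxA: "ux j x t = F1 j (x - c j * t)" if j: "j\<in>E" "x\<in>{0..len j}" "t \<ge> 0" for j x t
    by (rule DU[where S="{0..len j}" and f="\<lambda>y. u (gam j y) t" and g="\<lambda>y. phi j (y - c j * t)"])
       (use der j uphi lenpos nbot_Icc L1[OF F1d[OF j(1)]] in auto)
  have utA: "ut j x t = - c j * F1 j (x - c j * t)" if j: "j\<in>E" "x\<in>{0..len j}" "t \<ge> 0" for j x t
    by (rule DU[where S="{0..}" and f="\<lambda>s. u (gam j x) s" and g="\<lambda>w. phi j (x - c j * w)"])
       (use der j uphi nbot_Ici L2[OF F1d[OF j(1)]] in auto)
  have utxA: "utx j x t = - c j * F2 j (x - c j * t)" if j: "j\<in>E" "x\<in>{0..len j}" "t \<ge> 0" for j x t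
  proof (rule DU[where S="{0..len j}" and f="\<lambda>y. ut j y t" and g="\<lambda>y. - c j * F1 j (y - c j * t)"])
    show "((\<lambda>y. - c j * F1 j (y - c j * t)) has_real_derivative - c j * F2 j (x - c j * t)) (at x)"
      by (rule DERIV_cmult) (rule L1[OF F2d[OF j(1)]])
  qed (use der j utA lenpos nbot_Icc in auto)
  have utxxA: "utxx j x t = - c j * F3 j (x - c j * t)" if j: "j\<in>E" "x\<in>{0..len j}" "t \<ge> 0" for j x t
  proof (rule DU[where S="{0..len j}" and f="\<lambda>y. utx j y t" and g="\<lambda>y. - c j * F2 j (y - c j * t)"])
    show "((\<lambda>y. - c j * F2 j (y - c j * t)) has_real_derivative - c j * F3 j (x - c j * t)) (at x)"
      by (rule DERIV_cmult) (rule L1[OF F3d[OF j(1)]])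
  qed (use der j utxA lenpos nbot_Icc in auto)

  have ode: "\<forall>z<len j. F3 j z = ((c j - d j)/(a j * c j) + (- b j/(a j * c j)) * phi j z) * F1 j z"
    if j: "j \<in> E" for j
  proof (intro allI impI)
    fix z assume z: "z < len j"
    define x where "x = (if z < len j / 2 then len j / 2 else (z + len j) / 2)"
    define t where "t = (x - z) / c j"
    have lj: "len j > 0" and cj: "c j > 0" and aj: "a j > 0" using lenpos apos cpos j by auto
    have x: "x \<in> {0<..<len j}" "z < x" unfolding x_def using lj z by auto
    have t: "t > 0" unfolding t_def using x cj by auto
    have xz: "x - c j * t = z" unfolding t_def using cj by simp
    have xI: "x \<in> {0..len j}" using x by auto
    from pde j x t have "ut j x t - a j * utxx j x t + b j * u (gam j x) t * ux j x t + d j * ux j x t = 0"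
      by auto
    hence "- c j * F1 j z - a j * (- c j * F3 j z) + b j * phi j z * F1 j z + d j * F1 j z = 0"
      using utA[OF j xI] utxxA[OF j xI] uxA[OF j xI] uphi[OF j xI] t xz by auto
    hence h: "a j * c j * F3 j z = (c j - d j - b j * phi j z) * F1 j z"
      by (simp add: algebra_simps)
    have "F3 j z = (c j - d j - b j * phi j z) * F1 j z / (a j * c j)"
      using h aj cj by (simp add: field_simps)
    also have "\<dots> = ((c j - d j)/(a j * c j) + (- b j/(a j * c j)) * phi j z) * F1 j z"
      using aj cj by (simp add: field_simps)
    finally show "F3 j z = ((c j - d j)/(a j * c j) + (- b j/(a j * c j)) * phi j z) * F1 j z" .
  qed

  have VF: "\<forall>z\<le>len k. phi k z = C"
    if k: "k \<in> E" and p: "p = 0 \<or> p = len k" and h: "\<forall>t\<ge>0. phi k (p - c k * t) = C" for k p C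
    using vertex_flat[OF F[OF k] ode[OF k] lenpos[rule_format, OF k] cpos[OF k] p h] .

  have vpI: "vparam len gam k w \<in> {0..len k}" if "k \<in> E" for k w
    using lenpos that by (auto simp: vparam_def)
  have vp: "vparam len gam k w = 0 \<or> vparam len gam k w = len k" for k w
    by (simp add: vparam_def)
  have incE: "incident E len gam w \<subseteq> E" for w by (auto simp: incident_def)

  have stepD: "\<forall>k\<in>incident E len gam w. \<forall>z\<le>len k. phi k z = C"
    if w: "w \<in> ram_vertices E len gam" and k': "k' \<in> incident E len gam w"
      and fl: "\<forall>z\<le>len k'. phi k' z = C" for w k' C
  proof
    fix k assume k: "k \<in> incident E len gam w"
    have kE: "k \<in> E" and k'E: "k' \<in> E" using k k' incE by auto
    show "\<forall>z\<le>len k. phi k z = C"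
    proof (rule VF[OF kE vp], intro allI impI)
      fix t :: real assume t: "t \<ge> 0"
      have "phi k (vparam len gam k w - c k * t) = u (gam k (vparam len gam k w)) t"
        using uphi[OF kE vpI[OF kE] t] by simp
      also have "\<dots> = u (gam k' (vparam len gam k' w)) t" using cont[rule_format, OF w t k k'] .
      also have "\<dots> = phi k' (vparam len gam k' w - c k' * t)"
        using uphi[OF k'E vpI[OF k'E] t] by simp
      also have "\<dots> = C"
      proof -
        have "vparam len gam k' w - c k' * t \<le> len k'"
        proof -
          have "0 \<le> c k' * t" using cpos[OF k'E] t by simp
          thus ?thesis using vpI[OF k'E, of w] by simp
        qed
        thus ?thesis using fl by blast
      qed
      finally show "phi k (vparam len gam k w - c k * t) = C" .
    qed
  qed

  define I where "I = incident E len gam v0"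
  have v0V: "v0 \<in> vertices E len gam" and cardI: "card I \<ge> 2"
    using v0 unfolding ram_vertices_def I_def by auto
  have finI: "finite I" using fin v0V I_def by auto
  have IE: "I \<subseteq> E" using incE I_def by auto
  have Ine: "I \<noteq> {}" using cardI by auto
  obtain \<sigma> :: real where sg: "\<sigma> \<noteq> 0" "\<forall>k\<in>I. iota len gam v0 k = \<sigma>"
  proof (cases "is_sink E len gam v0")
    case True thus ?thesis using that[of 1] unfolding is_sink_def I_def by auto
  next
    case False thus ?thesis using ss that[of "-1"] unfolding is_source_def I_def by auto
  qed
  obtain j0 where j0: "j0 \<in> I" using Ine by auto
  have j0E: "j0 \<in> E" using j0 IE by auto
  define P where "P k = vparam len gam k v0" for k
  define g where "g t = phi j0 (P j0 - c j0 * t)" for t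
  define G where "G t = - c j0 * F1 j0 (P j0 - c j0 * t)" for t
  have dg: "(g has_real_derivative G t) (at t)" for t
    unfolding g_def G_def by (rule L2[OF F1d[OF j0E]])
  have eqg: "phi k (P k - c k * t) = g t" if k: "k \<in> I" and t: "t \<ge> 0" for k t
  proof -
    have kE: "k \<in> E" using k IE by auto
    have "phi k (P k - c k * t) = u (gam k (P k)) t" using uphi[OF kE vpI[OF kE] t] P_def by simp
    also have "\<dots> = u (gam j0 (P j0)) t" using cont[rule_format, OF v0 t, of k j0] k j0 unfolding P_def I_def by simp
    also have "\<dots> = g t" using uphi[OF j0E vpI[OF j0E] t] P_def g_def by simp
    finally show ?thesis .
  qed
  have F1eq: "F1 k (P k - c k * t) = - G t / c k" if k: "k \<in> I" and t: "t > 0" for k t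
  proof -
    have kE: "k \<in> E" using k IE by auto
    have "((\<lambda>w. phi k (P k - c k * w)) has_real_derivative G t) (at t)"
      by (rule has_field_derivative_transform_within_open[OF dg, where S="{0<..}"])
         (use t eqg[OF k] in auto)
    moreover have "((\<lambda>w. phi k (P k - c k * w)) has_real_derivative (- c k * F1 k (P k - c k * t))) (at t)"
      by (rule L2[OF F1d[OF kE]])
    ultimately have "- c k * F1 k (P k - c k * t) = G t" using DERIV_unique by blast
    thus ?thesis using cpos[OF kE] by (simp add: field_simps)
  qed
  have G0: "G t = 0" if t: "t > 0" for t
  proof -
    have "0 = (\<Sum>k\<in>I. iota len gam v0 k * a k * ux k (vparam len gam k v0) t)"
      using kh v0 t unfolding I_def by auto
    also have "\<dots> = (\<Sum>k\<in>I. (- \<sigma> * G t) * (a k / c k))"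
    proof (rule sum.cong)
      fix k assume k: "k \<in> I"
      have kE: "k \<in> E" using k IE by auto
      have "ux k (vparam len gam k v0) t = F1 k (P k - c k * t)"
        using uxA[OF kE vpI[OF kE]] t P_def by simp
      thus "iota len gam v0 k * a k * ux k (vparam len gam k v0) t = (- \<sigma> * G t) * (a k / c k)"
        using F1eq[OF k t] sg(2) k by simp
    qed simp
    also have "\<dots> = (- \<sigma> * G t) * (\<Sum>k\<in>I. a k / c k)" by (simp add: sum_distrib_left)
    finally have "(- \<sigma> * G t) * (\<Sum>k\<in>I. a k / c k) = 0" by simp
    moreover have "(\<Sum>k\<in>I. a k / c k) > 0"
      using finI Ine IE apos cpos by (intro sum_pos) auto
    ultimately show ?thesis using sg(1) by simp
  qed
  have gconst: "g t = g 0" if t: "t \<ge> 0" for t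
  proof (cases "t = 0")
    case True thus ?thesis by simp
  next
    case False
    have "continuous_on {0..t} g"
      by (intro continuous_at_imp_continuous_on ballI DERIV_isCont[OF dg])
    moreover have "\<And>x. 0 < x \<Longrightarrow> x < t \<Longrightarrow> (g has_real_derivative 0) (at x)"
    proof -
      fix x :: real assume "0 < x" "x < t"
      thus "(g has_real_derivative 0) (at x)" using dg[of x] G0[of x] by simp
    qed
    moreover have "0 < t" using False t by simp
    ultimately show ?thesis using DERIV_isconst2[of 0 t g t] by simp
  qed
  define C where "C = g 0"
  have base0: "\<forall>k\<in>I. \<forall>z\<le>len k. phi k z = C"
  proof
    fix k assume k: "k \<in> I"
    have kE: "k \<in> E" using k IE by auto
    show "\<forall>z\<le>len k. phi k z = C"
    proof (rule VF[OF kE vp[of k v0]], intro allI impI)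
      fix t :: real assume t: "t \<ge> 0"
      have "phi k (vparam len gam k v0 - c k * t) = g t" using eqg[OF k t] unfolding P_def .
      also have "\<dots> = C" using gconst[OF t] unfolding C_def .
      finally show "phi k (vparam len gam k v0 - c k * t) = C" .
    qed
  qed

  have reach: "\<forall>k\<in>incident E len gam w. \<forall>z\<le>len k. phi k z = C"
    if "(v0, w) \<in> {(x, y). adjacent E len gam x y}\<^sup>*" for w
    using that
  proof (induction rule: rtrancl_induct)
    case base thus ?case using base0 unfolding I_def .
  next
    case (step w w')
    from step(2) obtain e where e: "e \<in> E" "ends len gam e = {w, w'}" unfolding adjacent_def by blast
    have ew: "e \<in> incident E len gam w" and ew': "e \<in> incident E len gam w'"
      using e unfolding incident_def by blast+
    have fle: "\<forall>z\<le>len e. phi e z = C" using step.IH ew by blast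
    have w'V: "w' \<in> vertices E len gam" using e unfolding vertices_def by blast
    show ?case
    proof (cases "w' \<in> ram_vertices E len gam")
      case True thus ?thesis using stepD[OF True ew' fle] by blast
    next
      case False
      hence c2: "card (incident E len gam w') < 2" using w'V by (auto simp: ram_vertices_def)
      have "incident E len gam w' \<subseteq> {e}"
      proof
        fix k assume k: "k \<in> incident E len gam w'"
        show "k \<in> {e}"
        proof (rule ccontr)
          assume "k \<notin> {e}"
          hence "card {e, k} = 2" by auto
          moreover have "card {e, k} \<le> card (incident E len gam w')"
            using k ew' fin w'V by (intro card_mono) auto
          ultimately show False using c2 by simp
        qed
      qed
      thus ?thesis using fle by auto
    qed
  qed

  have "\<forall>p\<in>net_points E len gam. \<forall>t\<ge>0. u p t = C"
  proof (intro ballI allI impI)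
    fix p and t :: real assume p: "p \<in> net_points E len gam" and t: "t \<ge> 0"
    then obtain j x where j: "j \<in> E" "x \<in> {0..len j}" "p = gam j x"
      unfolding net_points_def edge_img_def by blast
    have "gam j 0 \<in> vertices E len gam" using j(1) unfolding vertices_def ends_def by blast
    hence "(v0, gam j 0) \<in> {(x, y). adjacent E len gam x y}\<^sup>*" using conn v0V by blast
    moreover have "j \<in> incident E len gam (gam j 0)" using j(1) unfolding incident_def ends_def by blast
    ultimately have "\<forall>z\<le>len j. phi j z = C" using reach by blast
    moreover have "x - c j * t \<le> len j"
    proof -
      have "0 \<le> c j * t" using t cpos[OF j(1)] by simp
      thus ?thesis using j(2) by simp
    qed
    ultimately show "u p t = C" using uphi[OF j(1,2) t] j(3) by simp
  qed
  thus False using assms(5) by blast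
qed

end
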